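(* Let $h\in\mathcal H$, $d=\operatorname{hdepth}(h)$, $k_0=k_0(h)$ and $h_0=h(k_0)$. Then for every integer $k$ with $k_0\le k\le d$ we have $h(k)\ge \binom{d-k_0}{k-k_0}h_0$.
   Context: $\mathcal H$ denotes the set of nonzero functions $h:\mathbb Z\to\mathbb Z_{\ge 0}$ such that $h(j)=0$ for all sufficiently negative $j$. For $h\in\mathcal H$ and integers $k\le d$, set $\beta_k^d(h)=\sum_{j\le k}(-1)^{k-j}\binom{d-j}{k-j}h(j)$, and $\operatorname{hdepth}(h)=\max\{d\in\mathbb Z:\ \beta_k^d(h)\ge 0\text{ for all integers }k\le d\}$. Also $k_0(h)=\min\{j: h(j)>0\}$. *)

theory Defs
  imports Main
begin

definition in_H :: "(int \<Rightarrow> nat) \<Rightarrow> bool" where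
  "in_H h \<longleftrightarrow> h \<noteq> (\<lambda>_. 0) \<and> (\<exists>N. \<forall>j. j < N \<longrightarrow> h j = 0)"

text \<open>beta_k^d(h) = sum_{j<=k} (-1)^(k-j) binom(d-j, k-j) h(j), for k <= d.
  Only finitely many nonzero terms occur for h in H; we sum over the (finite) support below k.\<close>
definition beta :: "(int \<Rightarrow> nat) \<Rightarrow> int \<Rightarrow> int \<Rightarrow> int" where
  "beta h k d = (\<Sum>j\<in>{j. j \<le> k \<and> h j \<noteq> 0}.
      (-1) ^ nat (k - j) * int (nat (d - j) choose nat (k - j)) * int (h j))"

definition hdepth :: "(int \<Rightarrow> nat) \<Rightarrow> int" where
  "hdepth h = (GREATEST d. \<forall>k. k \<le> d \<longrightarrow> beta h k d \<ge> 0)"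

definition k0 :: "(int \<Rightarrow> nat) \<Rightarrow> int" where
  "k0 h = (LEAST j. h j > 0)"

end

theory Submission imports Defs begin

lemma inner_alt:
  assumes "l \<le> m"
  shows "(\<Sum>n=l..m. (-1::int)^(n-l) * int (m-l choose (n-l))) = (if l = m then 1 else 0)"
proof -
  have "(\<Sum>n=l..m. (-1::int)^(n-l) * int (m-l choose (n-l))) = (\<Sum>i=0..m-l. (-1::int)^i * int (m-l choose i))"
    using assms by (intro sum.reindex_bij_witness[of _ "\<lambda>i. i + l" "\<lambda>n. n - l"]) auto
  also have "\<dots> = (if l = m then 1 else 0)"
  proof (cases "l = m")
    case True then show ?thesis by simp
  next
    case False
    then have "m - l > 0" using assms by simp
    from choose_alternating_sum[OF this, where 'a=int] False show ?thesis
      by (simp add: atLeast0AtMost)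
  qed
  finally show ?thesis .
qed

lemma per_l:
  fixes a :: "nat \<Rightarrow> int"
  assumes "l \<le> m" "m \<le> D"
  shows "(\<Sum>n\<le>m. (if l \<le> n then int (D-n choose (m-n)) * ((-1)^(n-l) * int (D-l choose (n-l)) * a l) else 0))
     = (if l = m then a m else 0)"
proof -
  have "(\<Sum>n\<le>m. (if l \<le> n then int (D-n choose (m-n)) * ((-1)^(n-l) * int (D-l choose (n-l)) * a l) else 0))
     = (\<Sum>n\<in>{n\<in>{..m}. l \<le> n}. int (D-n choose (m-n)) * ((-1)^(n-l) * int (D-l choose (n-l)) * a l))"
    by (rule sum.inter_filter[symmetric]) simp
  also have "{n\<in>{..m}. l \<le> n} = {l..m}" by auto
  also have "(\<Sum>n=l..m. int (D-n choose (m-n)) * ((-1)^(n-l) * int (D-l choose (n-l)) * a l))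
     = (\<Sum>n=l..m. (a l * int (D-l choose (m-l))) * ((-1)^(n-l) * int (m-l choose (n-l))))"
  proof (rule sum.cong[OF refl])
    fix n assume n: "n \<in> {l..m}"
    have "(D - l choose (m - l)) * (m - l choose (n - l)) = (D - l choose (n - l)) * (D - l - (n - l) choose (m - l - (n - l)))"
      by (rule choose_mult) (use n assms in auto)
    also have "D - l - (n - l) = D - n" using n by auto
    also have "m - l - (n - l) = m - n" using n by auto
    finally have e: "(D - l choose (m - l)) * (m - l choose (n - l)) = (D - l choose (n - l)) * (D - n choose (m - n))" .
    have e2: "int (D - l choose (m - l)) * int (m - l choose (n - l)) = int (D - l choose (n - l)) * int (D - n choose (m - n))"
      using arg_cong[OF e, of int] by simp
    show "int (D-n choose (m-n)) * ((-1)^(n-l) * int (D-l choose (n-l)) * a l)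
       = (a l * int (D-l choose (m-l))) * ((-1)^(n-l) * int (m-l choose (n-l)))"
      using e2 by (simp add: algebra_simps)
  qed
  also have "\<dots> = (a l * int (D-l choose (m-l))) * (\<Sum>n=l..m. (-1)^(n-l) * int (m-l choose (n-l)))"
    by (simp add: sum_distrib_left)
  also have "\<dots> = (if l = m then a m else 0)" using inner_alt[OF assms(1)] by simp
  finally show ?thesis .
qed

lemma inversion:
  fixes a :: "nat \<Rightarrow> int"
  assumes "m \<le> D"
  shows "(\<Sum>n\<le>m. int (D-n choose (m-n)) * (\<Sum>l\<le>n. (-1)^(n-l) * int (D-l choose (n-l)) * a l)) = a m"
proof -
  have "(\<Sum>n\<le>m. int (D-n choose (m-n)) * (\<Sum>l\<le>n. (-1)^(n-l) * int (D-l choose (n-l)) * a l))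
    = (\<Sum>n\<le>m. \<Sum>l\<le>m. (if l \<le> n then int (D-n choose (m-n)) * ((-1)^(n-l) * int (D-l choose (n-l)) * a l) else 0))"
  proof (rule sum.cong[OF refl])
    fix n assume n: "n \<in> {..m}"
    have "{..n} = {l\<in>{..m}. l \<le> n}" using n by auto
    then show "int (D-n choose (m-n)) * (\<Sum>l\<le>n. (-1)^(n-l) * int (D-l choose (n-l)) * a l)
      = (\<Sum>l\<le>m. (if l \<le> n then int (D-n choose (m-n)) * ((-1)^(n-l) * int (D-l choose (n-l)) * a l) else 0))"
      by (simp only: sum_distrib_left, subst sum.inter_filter[symmetric]) auto
  qed
  also have "\<dots> = (\<Sum>l\<le>m. \<Sum>n\<le>m. (if l \<le> n then int (D-n choose (m-n)) * ((-1)^(n-l) * int (D-l choose (n-l)) * a l) else 0))"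
    by (rule sum.swap)
  also have "\<dots> = (\<Sum>l\<le>m. (if l = m then a m else 0))"
    using per_l assms by (intro sum.cong) auto
  also have "\<dots> = a m" by simp
  finally show ?thesis .
qed

lemma k0_props:
  assumes "in_H h"
  shows "h (k0 h) > 0" "\<And>j. h j > 0 \<Longrightarrow> k0 h \<le> j"
proof -
  from assms obtain N where N: "\<And>j. j < N \<Longrightarrow> h j = 0" and nz: "h \<noteq> (\<lambda>_. 0)"
    unfolding in_H_def by auto
  from nz obtain j0 where j0: "h j0 > 0" by auto
  have "j0 \<ge> N" proof (rule ccontr) assume "\<not> N \<le> j0" then show False using N[of j0] j0 by simp qed
  define n0 where "n0 = (LEAST n::nat. h (N + int n) > 0)"
  have ex: "h (N + int (nat (j0 - N))) > 0" using j0 \<open>j0 \<ge> N\<close> by simp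
  have P0: "h (N + int n0) > 0" unfolding n0_def by (rule LeastI[of "\<lambda>n. h (N + int n) > 0", OF ex])
  have minimal: "N + int n0 \<le> y" if "h y > 0" for y
  proof -
    have "y \<ge> N" proof (rule ccontr) assume "\<not> N \<le> y" then show False using N[of y] that by simp qed
    then have "h (N + int (nat (y - N))) > 0" using that by simp
    then have "n0 \<le> nat (y - N)" unfolding n0_def by (rule Least_le)
    then show ?thesis using \<open>y \<ge> N\<close> by linarith
  qed
  have "k0 h = N + int n0" unfolding k0_def
    by (rule Least_equality) (use P0 minimal in auto)
  then show "h (k0 h) > 0" "\<And>j. h j > 0 \<Longrightarrow> k0 h \<le> j" using P0 minimal by auto
qed

lemma beta_reindex:
  assumes H: "in_H h" and md: "k0 h + int m \<le> d"
  shows "beta h (k0 h + int m) d =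
    (\<Sum>n\<le>m. (-1)^(m-n) * int (nat (d - k0 h) - n choose (m-n)) * int (h (k0 h + int n)))"
proof -
  define K where "K = k0 h"
  define g where "g = (\<lambda>j. (-1::int) ^ nat (K + int m - j) * int (nat (d - j) choose nat (K + int m - j)) * int (h j))"
  have sub: "{j. j \<le> K + int m \<and> h j \<noteq> 0} \<subseteq> {K..K + int m}"
    using k0_props(2)[OF H] unfolding K_def by fastforce
  have "beta h (K + int m) d = sum g {j. j \<le> K + int m \<and> h j \<noteq> 0}"
    unfolding beta_def g_def ..
  also have "\<dots> = sum g {K..K + int m}"
    by (rule sum.mono_neutral_left) (use sub in \<open>auto simp: g_def\<close>)
  also have "\<dots> = (\<Sum>n\<le>m. g (K + int n))"
    by (rule sum.reindex_bij_witness[of _ "\<lambda>n. K + int n" "\<lambda>j. nat (j - K)"]) auto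
  also have "\<dots> = (\<Sum>n\<le>m. (-1)^(m-n) * int (nat (d - K) - n choose (m-n)) * int (h (K + int n)))"
  proof (rule sum.cong[OF refl])
    fix n assume n: "n \<in> {..m}"
    have 1: "nat (K + int m - (K + int n)) = m - n" using n by auto
    have 2: "nat (d - (K + int n)) = nat (d - K) - n" using n md unfolding K_def by auto
    show "g (K + int n) = (-1)^(m-n) * int (nat (d - K) - n choose (m-n)) * int (h (K + int n))"
      unfolding g_def 1 2 ..
  qed
  finally show ?thesis unfolding K_def .
qed

lemma hdepth_props:
  assumes H: "in_H h"
  shows "\<And>k. k \<le> hdepth h \<Longrightarrow> beta h k (hdepth h) \<ge> 0" "k0 h \<le> hdepth h"
proof -
  define K where "K = k0 h"
  define P where "P = (\<lambda>d. \<forall>k. k \<le> d \<longrightarrow> beta h k d \<ge> 0)"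
  have hK: "h K > 0" using k0_props(1)[OF H] unfolding K_def .
  have below: "beta h k d = 0" if "k < K" for k d
  proof -
    have "{j. j \<le> k \<and> h j \<noteq> 0} = {}" proof (intro equalityI subsetI)
      fix j assume "j \<in> {j. j \<le> k \<and> h j \<noteq> 0}"
      then have "j \<le> k" "h j > 0" by auto
      then show "j \<in> {}" using k0_props(2)[OF H, of j] that unfolding K_def by simp
    qed simp
    then show ?thesis unfolding beta_def by simp
  qed
  have PK: "P K" unfolding P_def
  proof (intro allI impI)
    fix k assume "k \<le> K"
    show "beta h k K \<ge> 0"
    proof (cases "k < K")
      case True then show ?thesis using below by simp
    next
      case False
      then have "k = K + int 0" using \<open>k \<le> K\<close> by simp
      then show ?thesis using beta_reindex[OF H, of 0 K] unfolding K_def by simp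
    qed
  qed
  have bound: "d \<le> K + int (h (K + 1))" if "P d" for d
  proof (rule ccontr)
    assume "\<not> ?thesis"
    then have d: "d > K + int (h (K + 1))" by simp
    then have "K + int 1 \<le> d" by simp
    from beta_reindex[OF H this[unfolded K_def]]
    have "beta h (K + 1) d = int (h (K + 1)) - int (nat (d - K)) * int (h K)"
      unfolding K_def by (simp add: atMost_Suc)
    moreover have "beta h (K + 1) d \<ge> 0" using \<open>P d\<close> d unfolding P_def by simp
    moreover have "nat (d - K) * h K \<ge> nat (d - K)" using hK by simp
    then have "int (nat (d - K)) * int (h K) \<ge> int (nat (d - K))" by (metis of_nat_le_iff of_nat_mult)
    ultimately show False using d by linarith
  qed
  define S where "S = {d. P d \<and> K \<le> d}"
  have finS: "finite S" by (rule finite_subset[of _ "{K..K + int (h (K+1))}"]) (auto simp: S_def bound)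
  have KS: "K \<in> S" using PK by (simp add: S_def)
  define x where "x = Max S"
  have xS: "x \<in> S" unfolding x_def using finS KS by (intro Max_in) auto
  have great: "y \<le> x" if "P y" for y
  proof (cases "K \<le> y")
    case True then have "y \<in> S" using that by (simp add: S_def)
    then show ?thesis unfolding x_def using finS by simp
  next
    case False then show ?thesis using xS by (simp add: S_def)
  qed
  have "hdepth h = x" unfolding hdepth_def
    by (rule Greatest_equality) (use xS great in \<open>auto simp: S_def P_def\<close>)
  then show "\<And>k. k \<le> hdepth h \<Longrightarrow> beta h k (hdepth h) \<ge> 0" "k0 h \<le> hdepth h"
    using xS unfolding S_def P_def K_def by auto
qed

theorem proposition1p7:
  fixes h :: "int \<Rightarrow> nat" and k :: int
  assumes "in_H h"
    and "k0 h \<le> k" and "k \<le> hdepth h"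
  shows "h k \<ge> (nat (hdepth h - k0 h) choose nat (k - k0 h)) * h (k0 h)"
proof -
  define K where "K = k0 h"
  define d where "d = hdepth h"
  define m where "m = nat (k - K)"
  define D where "D = nat (d - K)"
  define a where "a = (\<lambda>n. int (h (K + int n)))"
  define b where "b = (\<lambda>n. (\<Sum>l\<le>n. (-1)^(n-l) * int (D-l choose (n-l)) * a l))"
  have km: "k = K + int m" using assms(2) unfolding m_def K_def by simp
  have mD: "m \<le> D" using assms unfolding m_def D_def K_def d_def by simp
  have bnn: "b n \<ge> 0" if "n \<le> m" for n
  proof -
    have le: "k0 h + int n \<le> hdepth h" using that assms km unfolding K_def by simp
    have "b n = beta h (k0 h + int n) (hdepth h)"
      unfolding beta_reindex[OF assms(1) le] b_def a_def D_def K_def d_def ..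
    then show ?thesis using hdepth_props(1)[OF assms(1) le] by simp
  qed
  have b0: "b 0 = a 0" unfolding b_def by simp
  have "a m = (\<Sum>n\<le>m. int (D-n choose (m-n)) * b n)"
    unfolding b_def using inversion[OF mD, of a] by simp
  also have "\<dots> \<ge> int (D-0 choose (m-0)) * b 0"
    by (rule member_le_sum[where f="\<lambda>n. int (D-n choose (m-n)) * b n"]) (use bnn in auto)
  finally have "int (D choose m) * a 0 \<le> a m" using b0 by simp
  then have "int ((D choose m) * h K) \<le> int (h k)" unfolding a_def km by simp
  then show ?thesis unfolding D_def d_def m_def K_def by linarith
qed

end
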